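(* Let $N\ge1$, fix a time $t_k$, and let $\mu_i(t_k)\in\mathbb{R}$, $\sigma_i(t_k)>0$ for $i\in\{1,\dots,N\}$, $\sigma_{\min}^2(t_k)=\min_i\sigma_i^2(t_k)$ and $\gamma(t_k)\in[0,1)$. Let $C(t_k),A_1(t_k),\dots,A_N(t_k)$ be independent with $C(t_k)\sim\mathcal{N}(0,\sigma_{\min}^2(t_k)|\gamma(t_k)|)$ and $A_i(t_k)\sim\mathcal{N}(\mu_i(t_k),\sigma_i^2(t_k)-\sigma_{\min}^2(t_k)|\gamma(t_k)|)$, set $\widetilde q_i(t_k)=C(t_k)+A_i(t_k)$ and $\widetilde M(t_k)=\max(0,\widetilde q_1(t_k),\dots,\widetilde q_N(t_k))$. Then for every $i\in\{1,\dots,N\}$, $$\mathbb{P}\bigl[\widetilde M(t_k)=\widetilde q_i(t_k)\bigr]=\int_{\mathbb{R}} f_{A_i(t_k)}(x)\,F_{C(t_k)}(x)\prod_{j=1,\,j\neq i}^N F_{A_j(t_k)}(x)\,dx,$$ where $f_{A_i(t_k)}$ is the density of $A_i(t_k)$ and $F_{C(t_k)}$, $F_{A_j(t_k)}$ are the cumulative distribution functions of $C(t_k)$ and $A_j(t_k)$.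
   Context: $(\widetilde q_1(t_k),\dots,\widetilde q_N(t_k))$ is the common factor approximation and $\widetilde M(t_k)$ the common factor maximum; if $\gamma(t_k)=0$ then $C(t_k)$ is the constant $0$ and $F_{C(t_k)}(x)=\mathbf{1}_{\{x\ge0\}}$. *)

theory Defs
  imports "HOL-Probability.Probability"
begin

definition gauss_measure :: "real \<Rightarrow> real \<Rightarrow> real measure" where
  "gauss_measure m v =
     (if v = 0 then return borel m else density lborel (normal_density m (sqrt v)))"

end

theory Submission
  imports Defs
begin

lemma gauss_sym:
  assumes "0 \<le> v"
  shows "emeasure (gauss_measure 0 v) {-y..} = emeasure (gauss_measure 0 v) {..y}"
proof (cases "v = 0")
  case True
  then show ?thesis by (simp add: gauss_measure_def emeasure_return indicator_def)
next
  case False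
  let ?f = "\<lambda>x. ennreal (normal_density 0 (sqrt v) x) * indicator {-y..} x"
  have "emeasure (gauss_measure 0 v) {-y..} = (\<integral>\<^sup>+x. ?f x \<partial>lborel)"
    using False by (simp add: gauss_measure_def emeasure_density)
  also have "\<dots> = \<bar>-1::real\<bar> * (\<integral>\<^sup>+x. ?f (0 + (-1) * x) \<partial>lborel)"
    by (rule nn_integral_real_affine) auto
  also have "\<dots> = (\<integral>\<^sup>+x. ?f (0 + (-1) * x) \<partial>lborel)" by simp
  also have "\<dots> = (\<integral>\<^sup>+x. ennreal (normal_density 0 (sqrt v) x) * indicator {..y} x \<partial>lborel)"
    by (intro nn_integral_cong) (auto simp: normal_density_def indicator_def)
  also have "\<dots> = emeasure (gauss_measure 0 v) {..y}"
    using False by (simp add: gauss_measure_def emeasure_density)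
  finally show ?thesis .
qed

theorem lemma6:
  fixes M :: "'a measure"
    and N :: nat
    and \<mu> \<sigma> :: "nat \<Rightarrow> real"
    and \<gamma> :: real
    and C :: "'a \<Rightarrow> real"
    and A :: "nat \<Rightarrow> 'a \<Rightarrow> real"
    and i :: nat
  defines "\<sigma>min2 \<equiv> Min ((\<lambda>j. (\<sigma> j)\<^sup>2) ` {1..N})"
  assumes "prob_space M"
    and "N \<ge> 1"
    and "\<And>j. j \<in> {1..N} \<Longrightarrow> \<sigma> j > 0"
    and "0 \<le> \<gamma>" and "\<gamma> < 1"
    and "prob_space.indep_vars M (\<lambda>_. borel) (\<lambda>j. if j = 0 then C else A j) {0..N}"
    and "distr M borel C = gauss_measure 0 (\<sigma>min2 * \<bar>\<gamma>\<bar>)"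
    and "\<And>j. j \<in> {1..N} \<Longrightarrow>
           distr M borel (A j) = gauss_measure (\<mu> j) ((\<sigma> j)\<^sup>2 - \<sigma>min2 * \<bar>\<gamma>\<bar>)"
    and "i \<in> {1..N}"
  shows "measure M {\<omega> \<in> space M.
            Max (insert 0 ((\<lambda>j. C \<omega> + A j \<omega>) ` {1..N})) = C \<omega> + A i \<omega>}
         = (\<integral>x. normal_density (\<mu> i) (sqrt ((\<sigma> i)\<^sup>2 - \<sigma>min2 * \<bar>\<gamma>\<bar>)) x
                 * cdf (distr M borel C) x
                 * (\<Prod>j\<in>{1..N} - {i}. cdf (distr M borel (A j)) x) \<partial>lborel)"
proof -
  note smin = assms(1)
  interpret P: prob_space M by fact
  define I where "I = {0..N}"
  define X where "X = (\<lambda>j. if j = 0 then C else A j)"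
  define J where "J = {1..N} - {i}"
  define J0 where "J0 = I - {i}"
  define D where "D = (\<lambda>j. if j \<in> I then distr M borel (X j) else return borel 0)"
  define vi where "vi = (\<sigma> i)\<^sup>2 - \<sigma>min2 * \<bar>\<gamma>\<bar>"
  have iI: "i \<in> {1..N}" by fact
  have indep: "P.indep_vars (\<lambda>_. borel) X I" using assms(7) unfolding X_def I_def .
  have rv: "\<And>j. j \<in> I \<Longrightarrow> X j \<in> borel_measurable M"
    using indep unfolding P.indep_vars_def by auto
  have PD: "\<And>j. prob_space (D j)"
    unfolding D_def using rv by (auto intro: P.prob_space_distr prob_space_return)
  have FD: "\<And>j. finite_measure (D j)" using PD by (simp add: prob_space_def)
  interpret PS: product_prob_space D by (intro product_prob_spaceI PD)
  have setsD: "\<And>j. sets (D j) = sets borel" unfolding D_def by auto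
  have PiM_eq: "PiM I D = PiM I (\<lambda>j. distr M borel (X j))"
    by (intro PiM_cong) (auto simp: D_def)
  have distr_eq: "distr M (PiM I (\<lambda>_. borel)) (\<lambda>\<omega>. \<lambda>j\<in>I. X j \<omega>) = PiM I D"
    using P.indep_vars_iff_distr_eq_PiM'[where I=I and X=X and M'="\<lambda>_. borel"] indep rv PiM_eq
    by (auto simp: I_def)
  have Xv_meas: "(\<lambda>\<omega>. \<lambda>j\<in>I. X j \<omega>) \<in> measurable M (PiM I (\<lambda>_. borel))"
    using rv by (intro measurable_restrict) auto
  define S where "S = {f \<in> space (PiM I (\<lambda>_. borel::real measure)). 0 \<le> f 0 + f i \<and> (\<forall>j\<in>J. f j \<le> f i)}"
  have iI': "i \<in> I" "0 \<in> I" using iI by (auto simp: I_def)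
  have S_sets: "S \<in> sets (PiM I (\<lambda>_. borel))"
  proof -
    have "finite J" by (simp add: J_def)
    have JI: "J \<subseteq> I" by (auto simp: J_def I_def)
    have pj[measurable]: "Measurable.pred (PiM I (\<lambda>_. borel)) (\<lambda>x. x j \<le> (x i::real))" if "j \<in> J" for j
    proof -
      have "j \<in> I" using that JI by auto
      then have m1: "(\<lambda>x. x j) \<in> borel_measurable (PiM I (\<lambda>_. borel::real measure))"
        by (rule measurable_component_singleton)
      have m2: "(\<lambda>x. x i) \<in> borel_measurable (PiM I (\<lambda>_. borel::real measure))"
        using iI' by (intro measurable_component_singleton)
      show ?thesis unfolding pred_def by (rule borel_measurable_le[OF m1 m2])
    qed
    show ?thesis unfolding S_def using iI' JI \<open>finite J\<close> by measurable
  qed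
  have E_eq: "{\<omega> \<in> space M. Max (insert 0 ((\<lambda>j. C \<omega> + A j \<omega>) ` {1..N})) = C \<omega> + A i \<omega>}
      = (\<lambda>\<omega>. \<lambda>j\<in>I. X j \<omega>) -` S \<inter> space M"
  proof -
    have "Max (insert 0 ((\<lambda>j. C \<omega> + A j \<omega>) ` {1..N})) = C \<omega> + A i \<omega> \<longleftrightarrow>
          (0 \<le> C \<omega> + A i \<omega> \<and> (\<forall>j\<in>J. A j \<omega> \<le> A i \<omega>))" for \<omega>
      using iI by (subst Max_eq_iff) (auto simp: J_def)
    moreover have "(\<lambda>j\<in>I. X j \<omega>) \<in> space (PiM I (\<lambda>_. borel::real measure))" for \<omega>
      by (simp add: space_PiM)
    ultimately show ?thesis using iI iI' unfolding S_def
      by (auto simp: X_def J_def I_def)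
  qed
  define B :: "real \<Rightarrow> nat \<Rightarrow> real set" where "B = (\<lambda>y j. if j = 0 then {-y..} else {..y})"
  have I_ins: "I = insert i J0" "i \<notin> J0" "finite J0" using iI' by (auto simp: J0_def I_def)
  have J0_eq: "J0 = insert 0 J" "0 \<notin> J" using iI by (auto simp: J0_def J_def I_def)
  have S_sets': "S \<in> sets (PiM (insert i J0) D)"
    using S_sets I_ins(1) by (simp add: sets_PiM_cong[OF refl setsD])
  have jpos: "\<And>j. j \<in> J \<Longrightarrow> 0 < j" by (auto simp: J_def)
  have fin: "finite ((\<lambda>j. (\<sigma> j)\<^sup>2) ` {1..N})" "(\<lambda>j. (\<sigma> j)\<^sup>2) ` {1..N} \<noteq> {}"
    using assms(3) by auto
  have smin0: "0 \<le> \<sigma>min2" unfolding smin using fin by (simp add: Min_ge_iff)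
  have smin_le: "\<sigma>min2 \<le> (\<sigma> i)\<^sup>2" unfolding smin using fin iI by (intro Min_le) auto
  have v0: "0 \<le> \<sigma>min2 * \<bar>\<gamma>\<bar>" using smin0 by simp
  have vi_pos: "0 < vi"
  proof -
    have "\<sigma>min2 * \<bar>\<gamma>\<bar> \<le> (\<sigma> i)\<^sup>2 * \<gamma>"
      using smin_le assms(5) by (simp add: mult_right_mono)
    moreover have "(\<sigma> i)\<^sup>2 * \<gamma> < (\<sigma> i)\<^sup>2"
      using assms(4)[OF iI] assms(6) by simp
    ultimately show ?thesis unfolding vi_def by simp
  qed
  have D0: "D 0 = gauss_measure 0 (\<sigma>min2 * \<bar>\<gamma>\<bar>)" "D 0 = distr M borel C"
    using iI' assms(8) by (simp_all add: D_def X_def)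
  have DJ: "\<And>j. j \<in> J \<Longrightarrow> D j = distr M borel (A j)"
    by (auto simp: D_def X_def J_def I_def)
  have Di: "D i = density lborel (normal_density (\<mu> i) (sqrt vi))"
    using iI' iI assms(9)[OF iI] vi_pos by (simp add: D_def X_def vi_def gauss_measure_def)
  define G where "G = (\<lambda>y. cdf (distr M borel C) y * (\<Prod>j\<in>J. cdf (distr M borel (A j)) y))"
  have rd: "\<And>j. j \<in> I \<Longrightarrow> real_distribution (distr M borel (X j))"
    using rv by (intro P.real_distribution_distr)
  have rdC: "real_distribution (distr M borel C)" using rd[OF iI'(2)] by (simp add: X_def)
  have rdA: "\<And>j. j \<in> J \<Longrightarrow> real_distribution (distr M borel (A j))"
  proof -
    fix j assume "j \<in> J"
    then have "j \<in> I" "j \<noteq> 0" by (auto simp: J_def I_def)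
    then show "real_distribution (distr M borel (A j))" using rd[of j] by (simp add: X_def)
  qed
  have G_nonneg: "\<And>y. 0 \<le> G y" unfolding G_def by (simp add: cdf_def prod_nonneg)
  have G_le1: "\<And>y. G y \<le> 1"
  proof -
    fix y
    have "(\<Prod>j\<in>J. cdf (distr M borel (A j)) y) \<le> 1"
    proof (intro prod_le_1 conjI)
      fix j assume "j \<in> J"
      show "0 \<le> cdf (distr M borel (A j)) y" by (simp add: cdf_def)
      show "cdf (distr M borel (A j)) y \<le> 1" using rdA[OF \<open>j \<in> J\<close>] by (rule real_distribution.cdf_bounded_prob)
    qed
    moreover have "cdf (distr M borel C) y \<le> 1" using rdC by (simp add: real_distribution.cdf_bounded_prob)
    ultimately show "G y \<le> 1" unfolding G_def
      by (intro mult_le_one) (auto simp: cdf_def intro: prod_nonneg)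
  qed
  have G_meas: "G \<in> borel_measurable borel"
  proof -
    have m: "cdf D' \<in> borel_measurable borel" if "real_distribution D'" for D'
      by (rule borel_measurable_mono, rule monoI,
          rule finite_borel_measure.cdf_nondecreasing[OF real_distribution.finite_borel_measure_M[OF that]])
    show ?thesis unfolding G_def using m[OF rdC] m[OF rdA] by measurable
  qed
  have nd_nn: "\<And>y. 0 \<le> normal_density (\<mu> i) (sqrt vi) y" by (simp add: normal_density_nonneg)
  have G_int: "integrable lborel (\<lambda>y. normal_density (\<mu> i) (sqrt vi) y * G y)"
  proof -
    have m: "(\<lambda>y. normal_density (\<mu> i) (sqrt vi) y * G y) \<in> borel_measurable lborel"
      using G_meas by measurable
    have b: "\<And>y. norm (normal_density (\<mu> i) (sqrt vi) y * G y) \<le> norm (normal_density (\<mu> i) (sqrt vi) y)"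
    proof -
      fix y
      have "normal_density (\<mu> i) (sqrt vi) y * G y \<le> normal_density (\<mu> i) (sqrt vi) y"
        using G_le1[of y] nd_nn[of y] by (simp add: mult_left_le)
      then show "norm (normal_density (\<mu> i) (sqrt vi) y * G y) \<le> norm (normal_density (\<mu> i) (sqrt vi) y)"
        using G_nonneg[of y] nd_nn[of y] by simp
    qed
    show ?thesis
      using vi_pos by (intro Bochner_Integration.integrable_bound[OF _ m, of "normal_density (\<mu> i) (sqrt vi)"])
        (auto intro!: AE_I2 b[THEN order.trans] simp del: real_norm_def)
  qed
  have "emeasure M ((\<lambda>\<omega>. \<lambda>j\<in>I. X j \<omega>) -` S \<inter> space M)
      = emeasure (PiM I D) S"
    using emeasure_distr[OF Xv_meas S_sets] distr_eq by simp
  also have "\<dots> = (\<integral>\<^sup>+f. indicator S f \<partial>PiM I D)"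
    using S_sets by (simp add: sets_PiM_cong[OF refl setsD])
  also have "\<dots> = (\<integral>\<^sup>+y. (\<integral>\<^sup>+x. indicator S (x(i := y)) \<partial>PiM J0 D) \<partial>D i)"
    unfolding I_ins(1)
    by (rule PS.product_nn_integral_insert_rev[OF I_ins(3) I_ins(2)])
       (rule borel_measurable_indicator[OF S_sets'])
  also have "\<dots> = (\<integral>\<^sup>+y. emeasure (PiM J0 D) (PiE J0 (B y)) \<partial>D i)"
  proof (intro nn_integral_cong)
    fix y
    have "(\<integral>\<^sup>+x. indicator S (x(i := y)) \<partial>PiM J0 D) = (\<integral>\<^sup>+x. indicator (PiE J0 (B y)) x \<partial>PiM J0 D)"
    proof (intro nn_integral_cong)
      fix x assume x: "x \<in> space (PiM J0 D)"
      have spD: "space (D j) = UNIV" for j by (simp add: D_def)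
      have xe: "x \<in> extensional J0" using x by (simp add: space_PiM PiE_def)
      have "x(i := y) \<in> space (PiM I (\<lambda>_. borel::real measure))"
        using xe I_ins by (auto simp: space_PiM PiE_def extensional_def)
      moreover have "i \<noteq> 0" "\<And>j. j \<in> J \<Longrightarrow> j \<noteq> i" "\<And>j. j \<in> J \<Longrightarrow> 0 < j" using iI by (auto simp: J_def)
      ultimately have "x(i := y) \<in> S \<longleftrightarrow> x \<in> PiE J0 (B y)"
        using xe unfolding S_def J0_eq(1) B_def by (auto simp: PiE_def Pi_def)
      then show "indicator S (x(i := y)) = (indicator (PiE J0 (B y)) x :: ennreal)"
        by (simp add: indicator_def)
    qed
    also have "\<dots> = emeasure (PiM J0 D) (PiE J0 (B y))"
      by (intro nn_integral_indicator sets_PiM_I_finite I_ins(3))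
         (auto simp: setsD B_def)
    finally show "(\<integral>\<^sup>+x. indicator S (x(i := y)) \<partial>PiM J0 D) = emeasure (PiM J0 D) (PiE J0 (B y))" .
  qed
  also have "\<dots> = (\<integral>\<^sup>+y. (\<Prod>j\<in>J0. emeasure (D j) (B y j)) \<partial>D i)"
    by (intro nn_integral_cong PS.emeasure_PiM I_ins(3)) (auto simp: setsD B_def)
  also have "\<dots> = (\<integral>\<^sup>+y. ennreal (G y) \<partial>D i)"
  proof (intro nn_integral_cong)
    fix y
    have "(\<Prod>j\<in>J0. emeasure (D j) (B y j)) = emeasure (D 0) {-y..} * (\<Prod>j\<in>J. emeasure (D j) {..y})"
      unfolding J0_eq(1) using J0_eq(2) jpos by (simp add: B_def J_def)
    also have "emeasure (D 0) {-y..} = ennreal (cdf (distr M borel C) y)"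
    proof -
      have "emeasure (D 0) {-y..} = emeasure (D 0) {..y}" using gauss_sym[OF v0] D0(1) by simp
      also have "\<dots> = ennreal (measure (D 0) {..y})" by (rule finite_measure.emeasure_eq_measure[OF FD])
      finally show ?thesis using D0(2) by (simp add: cdf_def)
    qed
    also have "(\<Prod>j\<in>J. emeasure (D j) {..y}) = (\<Prod>j\<in>J. ennreal (cdf (distr M borel (A j)) y))"
    proof (intro prod.cong refl)
      fix j assume j: "j \<in> J"
      have "emeasure (D j) {..y} = ennreal (measure (D j) {..y})" by (rule finite_measure.emeasure_eq_measure[OF FD])
      then show "emeasure (D j) {..y} = ennreal (cdf (distr M borel (A j)) y)" using DJ[OF j] by (simp add: cdf_def)
    qed
    also have "\<dots> = ennreal (\<Prod>j\<in>J. cdf (distr M borel (A j)) y)"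
      by (rule prod_ennreal) (simp add: cdf_def)
    finally show "(\<Prod>j\<in>J0. emeasure (D j) (B y j)) = ennreal (G y)"
      by (simp add: G_def ennreal_mult cdf_def prod_nonneg)
  qed
  also have "\<dots> = (\<integral>\<^sup>+y. ennreal (normal_density (\<mu> i) (sqrt vi) y) * ennreal (G y) \<partial>lborel)"
    unfolding Di using G_meas by (intro nn_integral_density) auto
  also have "\<dots> = (\<integral>\<^sup>+y. ennreal (normal_density (\<mu> i) (sqrt vi) y * G y) \<partial>lborel)"
    by (intro nn_integral_cong) (use vi_pos in \<open>simp add: ennreal_mult normal_density_nonneg G_nonneg\<close>)
  also have "\<dots> = ennreal (\<integral>y. normal_density (\<mu> i) (sqrt vi) y * G y \<partial>lborel)"
    by (intro nn_integral_eq_integral G_int) (use vi_pos in \<open>simp add: normal_density_nonneg G_nonneg\<close>)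
  finally have emE: "emeasure M ((\<lambda>\<omega>. \<lambda>j\<in>I. X j \<omega>) -` S \<inter> space M) = ennreal (\<integral>y. normal_density (\<mu> i) (sqrt vi) y * G y \<partial>lborel)" .
  have "0 \<le> (\<integral>y. normal_density (\<mu> i) (sqrt vi) y * G y \<partial>lborel)"
    by (intro integral_nonneg_AE) (use vi_pos in \<open>simp add: normal_density_nonneg G_nonneg\<close>)
  then show ?thesis
    unfolding E_eq measure_def emE by (simp add: G_def vi_def J_def mult.assoc)
qed

end
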